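(* Let $P$ be the Borel probability measure on $\mathbb{R}$ with density $f(x)=\frac32$ if $x\in J_1:=[0,\frac13]$, $f(x)=\frac94$ if $x\in J_2\cup J_3$ where $J_2:=[\frac23,\frac79]$ and $J_3:=[\frac89,1]$, and $f(x)=0$ otherwise. Let $\alpha=\{a_1,a_2,a_3,a_4\}$ be an optimal set of four-means for $P$ with $a_1<a_2<a_3<a_4$. Then $a_1=\frac1{12}$, $a_2=\frac14$, $a_3=\frac{13}{18}$, $a_4=\frac{17}{18}$, and the corresponding quantization error is $V_4=\frac{13}{7776}$.
   Context: For $n\in\mathbb{N}$, the $n$th quantization error of $P$ is $V_n=\inf\{\int\min_{a\in\alpha}(x-a)^2\,dP(x):\alpha\subset\mathbb{R},\ \mathrm{card}(\alpha)\le n\}$, and an optimal set of $n$-means is a set $\alpha$ with $\mathrm{card}(\alpha)\le n$ attaining this infimum. *)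

theory Defs
  imports "HOL-Analysis.Analysis"
begin

definition dens :: "real \<Rightarrow> real" where
  "dens x = (if x \<in> {0..1/3} then 3/2
             else if x \<in> {2/3..7/9} \<union> {8/9..1} then 9/4 else 0)"

definition P :: "real measure" where
  "P = density lborel (\<lambda>x. ennreal (dens x))"

definition distortion :: "real measure \<Rightarrow> real set \<Rightarrow> real" where
  "distortion M \<alpha> = (\<integral>x. Min ((\<lambda>a. (x - a)\<^sup>2) ` \<alpha>) \<partial>M)"

definition quant_error :: "real measure \<Rightarrow> nat \<Rightarrow> real" where
  "quant_error M n = Inf {distortion M \<alpha> | \<alpha>. finite \<alpha> \<and> \<alpha> \<noteq> {} \<and> card \<alpha> \<le> n}"

definition optimal_set :: "real measure \<Rightarrow> nat \<Rightarrow> real set \<Rightarrow> bool" where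
  "optimal_set M n \<alpha> \<longleftrightarrow> finite \<alpha> \<and> \<alpha> \<noteq> {} \<and> card \<alpha> \<le> n
      \<and> distortion M \<alpha> = quant_error M n"

end

theory Submission
  imports Defs
begin

lemma ftc_real:
  fixes F f :: "real \<Rightarrow> real"
  assumes "a \<le> b" "\<And>x. a \<le> x \<Longrightarrow> x \<le> b \<Longrightarrow> (F has_real_derivative f x) (at x)"
  shows "integral {a..b} f = F b - F a"
proof (rule integral_unique, rule fundamental_theorem_of_calculus[OF assms(1)])
  fix x assume "x \<in> {a..b}"
  then show "(F has_vector_derivative f x) (at x within {a..b})"
    using assms(2) by (auto simp: has_real_derivative_iff_has_vector_derivative[symmetric] intro: has_field_derivative_at_within)
qed

lemma int_zero_on:
  fixes f :: "real \<Rightarrow> real"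
  assumes "\<And>x. a \<le> x \<Longrightarrow> x \<le> b \<Longrightarrow> f x = 0"
  shows "integral {a..b} f = 0"
proof -
  have "integral {a..b} f = integral {a..b} (\<lambda>x. 0::real)" by (rule integral_cong) (use assms in auto)
  then show ?thesis by simp
qed


lemma max_quad_int:
  fixes l r u v :: real
  assumes lr: "l \<le> r" and uv: "u \<le> v"
  shows "integral {l..r} (\<lambda>x. max ((x-u)*(v-x)) 0) =
    (if max l u \<le> min r v then
      ((u+v)*(min r v)^2/2 - (min r v)^3/3 - u * v * (min r v)) - ((u+v)*(max l u)^2/2 - (max l u)^3/3 - u * v * (max l u))
     else 0)"
proof (cases "max l u \<le> min r v")
  case True
  define L where "L = max l u"
  define R where "R = min r v"
  have LR: "l \<le> L" "L \<le> R" "R \<le> r" using True lr unfolding L_def R_def by auto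
  let ?f = "\<lambda>x. max ((x-u)*(v-x)) (0::real)"
  have int: "?f integrable_on {l..r}"
    by (rule integrable_continuous_interval) (intro continuous_intros)
  have int2: "?f integrable_on {L..r}"
    by (rule integrable_continuous_interval) (intro continuous_intros)
  have s1: "integral {l..L} ?f = 0"
  proof (cases "L = l")
    case True then show ?thesis by simp
  next
    case False
    then have "L = u" "l < u" unfolding L_def by auto
    show ?thesis
    proof (rule int_zero_on)
      fix x assume "l \<le> x" "x \<le> L"
      then have "(x-u)*(v-x) \<le> 0" using \<open>L = u\<close> uv by (intro mult_nonpos_nonneg) auto
      then show "?f x = 0" by simp
    qed
  qed
  have s3: "integral {R..r} ?f = 0"
  proof (cases "R = r")
    case True then show ?thesis by simp
  next
    case False
    then have "R = v" unfolding R_def by auto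
    show ?thesis
    proof (rule int_zero_on)
      fix x assume "R \<le> x" "x \<le> r"
      then have "(x-u)*(v-x) \<le> 0" using \<open>R = v\<close> uv by (intro mult_nonneg_nonpos) auto
      then show "?f x = 0" by simp
    qed
  qed
  have s2: "integral {L..R} ?f = ((u+v)*R^2/2 - R^3/3 - u * v * R) - ((u+v)*L^2/2 - L^3/3 - u * v * L)"
  proof -
    have "integral {L..R} ?f = integral {L..R} (\<lambda>x. (x-u)*(v-x))"
    proof (rule integral_cong)
      fix x assume "x \<in> {L..R}"
      then have "u \<le> x" "x \<le> v" unfolding L_def R_def by auto
      then show "?f x = (x-u)*(v-x)" by simp
    qed
    also have "\<dots> = ((u+v)*R^2/2 - R^3/3 - u * v * R) - ((u+v)*L^2/2 - L^3/3 - u * v * L)"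
      by (rule ftc_real[OF LR(2)]) (auto intro!: derivative_eq_intros simp: algebra_simps power2_eq_square)
    finally show ?thesis .
  qed
  have "integral {l..r} ?f = integral {l..L} ?f + integral {L..r} ?f"
    using Henstock_Kurzweil_Integration.integral_combine[OF LR(1) _ int] LR by simp
  also have "integral {L..r} ?f = integral {L..R} ?f + integral {R..r} ?f"
    using Henstock_Kurzweil_Integration.integral_combine[OF LR(2) LR(3) int2] by simp
  finally show ?thesis using s1 s2 s3 True unfolding L_def R_def by simp
next
  case False
  have "integral {l..r} (\<lambda>x. max ((x-u)*(v-x)) 0) = 0"
  proof (rule int_zero_on)
    fix x :: real assume x: "l \<le> x" "x \<le> r"
    have "(x-u)*(v-x) \<le> 0"
    proof (cases "r < u")
      case True then show ?thesis using x uv by (intro mult_nonpos_nonneg) auto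
    next
      case False
      then have "v < l" using \<open>\<not> max l u \<le> min r v\<close> lr uv by auto
      then show ?thesis using x uv by (intro mult_nonneg_nonpos) auto
    qed
    then show "max ((x-u)*(v-x)) 0 = 0" by simp
  qed
  then show ?thesis using if_not_P[OF False] by metis
qed


definition Af :: "real \<Rightarrow> real" where
  "Af b = integral {0..1/3} (\<lambda>x. max (1/144 - (x-b)^2) 0)"

lemma Af_formula:
  "Af b = (let u = b - 1/12; v = b + 1/12; L = max 0 u; R = min (1/3) v in
     if L \<le> R then ((u+v)*R^2/2 - R^3/3 - u * v * R) - ((u+v)*L^2/2 - L^3/3 - u * v * L) else 0)"
proof -
  have "Af b = integral {0..1/3} (\<lambda>x. max ((x-(b-1/12))*((b+1/12)-x)) 0)"
    unfolding Af_def by (rule integral_cong) (simp add: algebra_simps power2_eq_square)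
  also note max_quad_int[of 0 "1/3" "b-1/12" "b+1/12"]
  finally show ?thesis by (simp add: Let_def)
qed

lemma Af_facts:
  shows "Af b \<le> 1/1296"
    and "b < 1/12 \<or> b > 1/4 \<Longrightarrow> Af b < 1/1296"
    and "b \<le> -1/12 \<or> b \<ge> 5/12 \<Longrightarrow> Af b = 0"
proof -
  define u where "u = b - 1/12"
  define v where "v = b + 1/12"
  define Q where "Q x = (u+v)*x^2/2 - x^3/3 - u * v * x" for x
  have F: "Af b = (if max 0 u \<le> min (1/3) v then Q (min (1/3) v) - Q (max 0 u) else 0)"
    unfolding Af_formula u_def v_def Q_def Let_def by simp
  have QF: "Q y - Q x = ((y-u)^2/12 - (y-u)^3/3) - ((x-u)^2/12 - (x-u)^3/3)" for x y
    unfolding Q_def v_def u_def by (simp add: field_simps power2_eq_square power3_eq_cube)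
  have c1: "b \<le> -1/12 \<or> b \<ge> 5/12 \<Longrightarrow> Af b = 0"
  proof -
    assume h: "b \<le> -1/12 \<or> b \<ge> 5/12"
    show "Af b = 0"
    proof (cases "max 0 u \<le> min (1/3) v")
      case True
      then have "max 0 u = min (1/3) v" using h unfolding u_def v_def by auto
      then show ?thesis using F True by simp
    next
      case False then show ?thesis by (simp only: F if_not_P[OF False] if_False)
    qed
  qed
  have c2: "Af b = 1/1296 - (1/12-b)^2*(1/4-(1/12-b))/3" (is "_ = ?rhs") if h: "-1/12 < b" "b < 1/12"
  proof -
    have "max 0 u = 0" "min (1/3) v = v" using h unfolding u_def v_def by auto
    then have "Af b = Q v - Q 0" using F h unfolding v_def by simp
    also have "\<dots> = ?rhs" unfolding QF unfolding u_def v_def by (simp add: field_simps power2_eq_square power3_eq_cube)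
    finally show ?thesis .
  qed
  have c3: "Af b = 1/1296" (is "_ = ?rhs") if h: "1/12 \<le> b" "b \<le> 1/4"
  proof -
    have "max 0 u = u" "min (1/3) v = v" using h unfolding u_def v_def by auto
    then have "Af b = Q v - Q u" using F h unfolding v_def u_def by simp
    also have "\<dots> = ?rhs" unfolding QF unfolding u_def v_def by (simp add: field_simps power2_eq_square power3_eq_cube)
    finally show ?thesis .
  qed
  have c4: "Af b = 1/1296 - (5/12-b - 1/6)^2*((5/12-b)/3 + 1/36)" (is "_ = ?rhs") if h: "1/4 < b" "b < 5/12"
  proof -
    have "max 0 u = u" "min (1/3) v = 1/3" using h unfolding u_def v_def by auto
    then have "Af b = Q (1/3) - Q u" using F h unfolding v_def u_def by simp
    also have "\<dots> = ?rhs" unfolding QF unfolding u_def v_def by (simp add: field_simps power2_eq_square power3_eq_cube)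
    finally show ?thesis .
  qed
  have p2: "0 < (1/12-b)^2*(1/4-(1/12-b))/3" if "-1/12 < b" "b < 1/12"
    using that by (intro divide_pos_pos mult_pos_pos) auto
  have p4: "0 < (5/12-b - 1/6)^2*((5/12-b)/3 + 1/36)" if "1/4 < b" "b < 5/12"
  proof -
    have "0 < (5/12-b)/3 + 1/36" using that by (simp add: field_simps)
    moreover have "0 < (5/12-b - 1/6)^2" using that by simp
    ultimately show ?thesis by simp
  qed
  show "Af b \<le> 1/1296"
    using c1 c2 c3 c4 p2 p4 by (cases "b \<le> -1/12"; cases "b < 1/12"; cases "b \<le> 1/4"; cases "b < 5/12") force+
  show "b < 1/12 \<or> b > 1/4 \<Longrightarrow> Af b < 1/1296"
    using c1 c2 c3 c4 p2 p4 by (cases "b \<le> -1/12"; cases "b < 1/12"; cases "b \<le> 1/4"; cases "b < 5/12") force+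
  show "b \<le> -1/12 \<or> b \<ge> 5/12 \<Longrightarrow> Af b = 0" by (rule c1)
qed


lemma max_lin_int:
  fixes l r s z :: real
  assumes lr: "l \<le> r" and s: "0 \<le> s"
  shows "integral {l..r} (\<lambda>x. max (s*(x-z)) 0) =
    (if z \<le> r then s*((r-z)^2 - (max l z - z)^2)/2 else 0)"
proof (cases "z \<le> r")
  case True
  define L where "L = max l z"
  have LR: "l \<le> L" "L \<le> r" using True lr unfolding L_def by auto
  let ?f = "\<lambda>x. max (s*(x-z)) (0::real)"
  have int: "?f integrable_on {l..r}"
    by (rule integrable_continuous_interval) (intro continuous_intros)
  have s1: "integral {l..L} ?f = 0"
  proof (cases "L = l")
    case True then show ?thesis by simp
  next
    case False
    then have "L = z" unfolding L_def by auto
    show ?thesis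
    proof (rule int_zero_on)
      fix x assume "l \<le> x" "x \<le> L"
      then have "s*(x-z) \<le> 0" using \<open>L = z\<close> s by (intro mult_nonneg_nonpos) auto
      then show "?f x = 0" by simp
    qed
  qed
  have s2: "integral {L..r} ?f = s*((r-z)^2 - (L - z)^2)/2"
  proof -
    have "integral {L..r} ?f = integral {L..r} (\<lambda>x. s*(x-z))"
    proof (rule integral_cong)
      fix x assume "x \<in> {L..r}"
      then have "z \<le> x" unfolding L_def by auto
      then show "?f x = s*(x-z)" using s by simp
    qed
    also have "\<dots> = s*(r-z)^2/2 - s*(L-z)^2/2"
      by (rule ftc_real[OF LR(2)]) (auto intro!: derivative_eq_intros simp: field_simps power2_eq_square)
    finally show ?thesis by (simp add: algebra_simps)
  qed
  have "integral {l..r} ?f = integral {l..L} ?f + integral {L..r} ?f"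
    using Henstock_Kurzweil_Integration.integral_combine[OF LR(1) LR(2) int] by simp
  then show ?thesis using s1 s2 True unfolding L_def by simp
next
  case False
  have "integral {l..r} (\<lambda>x. max (s*(x-z)) 0) = 0"
  proof (rule int_zero_on)
    fix x :: real assume x: "l \<le> x" "x \<le> r"
    have "s*(x-z) \<le> 0" using x s False by (intro mult_nonneg_nonpos) auto
    then show "max (s*(x-z)) 0 = 0" by simp
  qed
  then show ?thesis using False by simp
qed

definition Bf :: "real \<Rightarrow> real \<Rightarrow> real" where
  "Bf m b = integral {m-1/18..m+1/18} (\<lambda>x. max (1/216 + (x-m)^2 - (x-b)^2) 0)"

lemma Bf_refl: "Bf m b = Bf (-m) (-b)"
proof -
  have "Bf (-m) (-b) = integral {-(m+1/18)..-(m-1/18)} (\<lambda>x. max (1/216 + ((-x)-m)^2 - ((-x)-b)^2) 0)"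
    unfolding Bf_def by (rule arg_cong2[where f=integral]) (auto simp: algebra_simps power2_eq_square)
  also have "\<dots> = Bf m b" unfolding Bf_def
    by (rule Henstock_Kurzweil_Integration.integral_reflect_real[where f="\<lambda>y. max (1/216 + (y-m)^2 - (y-b)^2) 0" and a="m-1/18" and b="m+1/18"])
  finally show ?thesis by simp
qed

lemma Bf_zero: "Bf m m = 1/1944"
proof -
  have "Bf m m = integral {m-1/18..m+1/18} (\<lambda>x. 1/216)"
    unfolding Bf_def by (rule integral_cong) auto
  also have "\<dots> = 1/1944" by simp
  finally show ?thesis .
qed

lemma Bf_pos:
  assumes d: "0 < b - m"
  shows "Bf m b < 1/1944"
    and "b - m \<ge> 3/20 \<Longrightarrow> Bf m b = 0"
    and "b - m \<ge> 1/16 \<Longrightarrow> Bf m b \<le> 265/1119744"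
proof -
  define d where "d = b - m"
  define k where "k = (1/216::real)"
  define z where "z = m + (d^2 - k)/(2*d)"
  define w where "w = m + 1/18 - z"
  have dpos: "d > 0" using d d_def by simp
  have rel: "2*(d*w) = d/9 + k - d^2"
    unfolding w_def z_def using dpos by (simp add: field_simps power2_eq_square)
  have "Bf m b = integral {m-1/18..m+1/18} (\<lambda>x. max ((2*d)*(x-z)) 0)"
    unfolding Bf_def
  proof (rule integral_cong)
    fix x
    have "1/216 + (x-m)^2 - (x-b)^2 = (2*d)*(x-z)"
      unfolding z_def d_def k_def using dpos d_def by (simp add: field_simps power2_eq_square)
    then show "max (1/216 + (x-m)^2 - (x-b)^2) 0 = max ((2*d)*(x-z)) 0" by simp
  qed
  also have "\<dots> = (if z \<le> m+1/18 then (2*d)*((m+1/18-z)^2 - (max (m-1/18) z - z)^2)/2 else 0)"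
    by (rule max_lin_int) (use dpos in auto)
  finally have B: "Bf m b = (if z \<le> m+1/18 then d*((m+1/18-z)^2 - (max (m-1/18) z - z)^2) else 0)"
    by simp
  have case1: "Bf m b = (2*(d*w) - d/9)/9" if "z \<le> m - 1/18"
  proof -
    have "max (m-1/18) z = m - 1/18" using that by simp
    then have "Bf m b = d*((m+1/18-z)^2 - (m-1/18 - z)^2)" using B that by simp
    also have "\<dots> = (2*(d*w) - d/9)/9" unfolding w_def by (simp add: field_simps power2_eq_square)
    finally show ?thesis .
  qed
  have case2: "Bf m b = (d*w)*w" if "m - 1/18 < z" "z \<le> m + 1/18"
  proof -
    have "max (m-1/18) z = z" using that by simp
    then have "Bf m b = d*((m+1/18-z)^2)" using B that by simp
    also have "\<dots> = (d*w)*w" unfolding w_def by (simp add: power2_eq_square)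
    finally show ?thesis .
  qed
  have case3: "Bf m b = 0" if "m + 1/18 < z" using B that by simp
  have dw: "d*w \<le> 5/1296"
  proof -
    have "0 \<le> (d - 1/18)^2" by simp
    then show ?thesis using rel unfolding k_def by (simp add: power2_eq_square algebra_simps)
  qed
  have dsq: "0 < d^2" using dpos by simp
  show "Bf m b < 1/1944"
  proof (cases "z \<le> m - 1/18")
    case True
    have "Bf m b = 1/1944 - d^2/9" using case1[OF True, unfolded rel k_def] by (simp add: field_simps)
    then show ?thesis using dsq by linarith
  next
    case False
    show ?thesis
    proof (cases "z \<le> m + 1/18")
      case True
      have w0: "0 \<le> w" "w < 1/9" using True False unfolding w_def by auto
      have "(d*w)*w \<le> (5/1296)*w" using dw w0 by (intro mult_right_mono) auto
      also have "\<dots> < 1/1944" using w0 by simp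
      finally show ?thesis using case2 False True by simp
    next
      case False then show ?thesis using case3 by simp
    qed
  qed
  show "b - m \<ge> 3/20 \<Longrightarrow> Bf m b = 0"
  proof -
    assume h: "b - m \<ge> 3/20"
    have "d*(d - 1/9) \<ge> (3/20)*(7/180)" using h unfolding d_def by (intro mult_mono) auto
    then have "2*(d*w) < 0" using rel unfolding k_def by (simp add: power2_eq_square algebra_simps)
    then have "w < 0" using dpos by (simp add: mult_less_0_iff)
    then have "m + 1/18 < z" unfolding w_def by simp
    then show ?thesis by (rule case3)
  qed
  show "b - m \<ge> 1/16 \<Longrightarrow> Bf m b \<le> 265/1119744"
  proof -
    assume h: "b - m \<ge> 1/16"
    have d16: "d \<ge> 1/16" using h d_def by simp
    have dd: "d^2 \<ge> 1/256" using mult_mono[OF d16 d16] dpos by (simp add: power2_eq_square)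
    show ?thesis
    proof (cases "z \<le> m - 1/18")
      case True
      then have "w \<ge> 1/9" unfolding w_def by simp
      then have "d*w \<ge> d*(1/9)" using dpos by (intro mult_left_mono) auto
      then have False using rel dd d16 unfolding k_def by linarith
      then show ?thesis ..
    next
      case False
      show ?thesis
      proof (cases "z \<le> m + 1/18")
        case True
        have w0: "0 \<le> w" using True unfolding w_def by auto
        have wb: "w \<le> 53/864"
        proof (rule ccontr)
          assume "\<not> w \<le> 53/864"
          then have "d*w > d*(53/864)" using dpos by (intro mult_strict_left_mono) auto
          then show False using rel dd d16 unfolding k_def by linarith
        qed
        have "(d*w)*w \<le> (5/1296)*w" using dw w0 by (intro mult_right_mono) auto
        also have "\<dots> \<le> (5/1296)*(53/864)" using wb by simp
        finally show ?thesis using case2 False True by simp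
      next
        case False then show ?thesis using case3 by simp
      qed
    qed
  qed
qed


lemma Bf_facts:
  shows "Bf m b \<le> 1/1944"
    and "b \<noteq> m \<Longrightarrow> Bf m b < 1/1944"
    and "\<bar>b - m\<bar> \<ge> 3/20 \<Longrightarrow> Bf m b = 0"
    and "\<bar>b - m\<bar> \<ge> 1/16 \<Longrightarrow> Bf m b \<le> 265/1119744"
proof -
  have all: "(b \<noteq> m \<longrightarrow> Bf m b < 1/1944) \<and> (\<bar>b - m\<bar> \<ge> 3/20 \<longrightarrow> Bf m b = 0)
      \<and> (\<bar>b - m\<bar> \<ge> 1/16 \<longrightarrow> Bf m b \<le> 265/1119744)"
  proof (cases "b > m")
    case True
    then have "0 < b - m" by simp
    note P = Bf_pos[OF this]
    show ?thesis using P True by auto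
  next
    case False
    show ?thesis
    proof (cases "b = m")
      case True then show ?thesis by simp
    next
      case False
      then have "0 < (-b) - (-m)" using \<open>\<not> b > m\<close> by simp
      note P = Bf_pos[OF this]
      show ?thesis using P Bf_refl[of m b] False \<open>\<not> b > m\<close> by auto
    qed
  qed
  then show "b \<noteq> m \<Longrightarrow> Bf m b < 1/1944"
    and "\<bar>b - m\<bar> \<ge> 3/20 \<Longrightarrow> Bf m b = 0"
    and "\<bar>b - m\<bar> \<ge> 1/16 \<Longrightarrow> Bf m b \<le> 265/1119744" by auto
  show "Bf m b \<le> 1/1944" using all Bf_zero[of m] by (cases "b = m") auto
qed

definition Nf :: "real \<Rightarrow> real" where
  "Nf b = 3/2 * Af b + 9/4 * Bf (13/18) b + 9/4 * Bf (17/18) b"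

lemma Nf_facts:
  shows "Nf b \<le> 1/864"
    and "Nf b = 1/864 \<Longrightarrow> (1/12 \<le> b \<and> b \<le> 1/4) \<or> b = 13/18 \<or> b = 17/18"
proof -
  have A1: "Af b \<le> 1/1296" by (rule Af_facts(1))
  have B21: "Bf (13/18) b \<le> 1/1944" by (rule Bf_facts(1))
  have B31: "Bf (17/18) b \<le> 1/1944" by (rule Bf_facts(1))
  have "Nf b \<le> 1/864 \<and> (Nf b = 1/864 \<longrightarrow> (1/12 \<le> b \<and> b \<le> 1/4) \<or> b = 13/18 \<or> b = 17/18)"
  proof (cases "b < 5/12")
    case True
    have "Bf (13/18) b = 0" using True by (intro Bf_facts(3)) auto
    moreover have "Bf (17/18) b = 0" using True by (intro Bf_facts(3)) auto
    ultimately have N: "Nf b = 3/2 * Af b" unfolding Nf_def by simp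
    show ?thesis
    proof (cases "b < 1/12 \<or> b > 1/4")
      case True
      then have "Af b < 1/1296" by (rule Af_facts(2))
      then show ?thesis using N by simp
    next
      case False then show ?thesis using N A1 by auto
    qed
  next
    case False
    then have A0: "Af b = 0" by (intro Af_facts(3)) auto
    show ?thesis
    proof (cases "b \<le> 79/100")
      case True
      have "Bf (17/18) b = 0" using True by (intro Bf_facts(3)) auto
      then have N: "Nf b = 9/4 * Bf (13/18) b" using A0 unfolding Nf_def by simp
      show ?thesis
      proof (cases "b = 13/18")
        case False
        then have "Bf (13/18) b < 1/1944" by (rule Bf_facts(2))
        then show ?thesis using N by simp
      next
        case True then show ?thesis using N B21 by auto
      qed
    next
      case False
      show ?thesis
      proof (cases "b < 22/25")
        case True
        have "Bf (17/18) b \<le> 265/1119744" using True by (intro Bf_facts(4)) auto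
        moreover have "Bf (13/18) b \<le> 265/1119744" using False by (intro Bf_facts(4)) auto
        ultimately show ?thesis using A0 unfolding Nf_def by auto
      next
        case False
        have "Bf (13/18) b = 0" using False by (intro Bf_facts(3)) auto
        then have N: "Nf b = 9/4 * Bf (17/18) b" using A0 unfolding Nf_def by simp
        show ?thesis
        proof (cases "b = 17/18")
          case False
          then have "Bf (17/18) b < 1/1944" by (rule Bf_facts(2))
          then show ?thesis using N by simp
        next
          case True then show ?thesis using N B31 by auto
        qed
      qed
    qed
  qed
  then show "Nf b \<le> 1/864"
    and "Nf b = 1/864 \<Longrightarrow> (1/12 \<le> b \<and> b \<le> 1/4) \<or> b = 13/18 \<or> b = 17/18" by auto
qed


lemma P_integral:
  fixes g :: "real \<Rightarrow> real"
  assumes g: "continuous_on UNIV g"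
  shows "integral\<^sup>L P g = 3/2 * integral {0..1/3} g + 9/4 * integral {2/3..7/9} g + 9/4 * integral {8/9..1} g"
proof -
  have dens_split: "dens x * g x = indicator {0..1/3} x * (3/2 * g x) + indicator {2/3..7/9} x * (9/4 * g x) + indicator {8/9..1::real} x * (9/4 * g x)" for x
    by (auto simp: dens_def indicator_def)
  have gm: "g \<in> borel_measurable borel" using g by (simp add: borel_measurable_continuous_onI)
  have dm: "dens \<in> borel_measurable borel" unfolding dens_def by measurable
  have "integral\<^sup>L P g = (\<integral>x. dens x * g x \<partial>lborel)"
    unfolding P_def
    by (subst integral_density) (auto simp: gm dm dens_def)
  also have "\<dots> = (\<integral>x. indicator {0..1/3} x * (3/2 * g x) + indicator {2/3..7/9} x * (9/4 * g x) + indicator {8/9..1::real} x * (9/4 * g x) \<partial>lborel)"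
    by (simp only: dens_split)
  also have "\<dots> = (LINT x:{0..1/3}|lborel. 3/2 * g x) + (LINT x:{2/3..7/9}|lborel. 9/4 * g x) + (LINT x:{8/9..1}|lborel. 9/4 * g x)"
  proof -
    have i: "set_integrable lborel {a..b} (\<lambda>x. c * g x)" for a b c :: real
      by (rule borel_integrable_atLeastAtMost') (intro continuous_intros continuous_on_subset[OF g], auto)
    show ?thesis using i[of 0 "1/3" "3/2"] i[of "2/3" "7/9" "9/4"] i[of "8/9" 1 "9/4"]
      unfolding set_integrable_def set_lebesgue_integral_def by simp
  qed
  also have "\<dots> = 3/2 * integral {0..1/3} g + 9/4 * integral {2/3..7/9} g + 9/4 * integral {8/9..1} g"
  proof -
    have i: "set_integrable lborel {a..b} g" for a b :: real
      by (rule borel_integrable_atLeastAtMost') (intro continuous_on_subset[OF g], auto)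
    show ?thesis by (simp add: set_borel_integral_eq_integral(2)[OF i])
  qed
  finally show ?thesis by simp
qed

definition mm :: "real \<Rightarrow> real \<Rightarrow> real \<Rightarrow> real \<Rightarrow> real \<Rightarrow> real" where
  "mm a1 a2 a3 a4 x = min ((x-a1)^2) (min ((x-a2)^2) (min ((x-a3)^2) ((x-a4)^2)))"

lemma mm_cont: "continuous_on S (mm a1 a2 a3 a4)"
  unfolding mm_def by (intro continuous_intros)

lemma mm_nonneg: "0 \<le> mm a1 a2 a3 a4 x"
  unfolding mm_def by simp

lemma distortion4: "distortion P {a1, a2, a3, a4} =
   3/2 * integral {0..1/3} (mm a1 a2 a3 a4) + 9/4 * integral {2/3..7/9} (mm a1 a2 a3 a4) + 9/4 * integral {8/9..1} (mm a1 a2 a3 a4)"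
proof -
  have "distortion P {a1, a2, a3, a4} = integral\<^sup>L P (mm a1 a2 a3 a4)"
    unfolding distortion_def mm_def by (simp add: min.assoc)
  then show ?thesis using P_integral[OF mm_cont] by simp
qed

lemma min4_ge: "min y1 (min y2 (min y3 y4)) + (max (p - y1) 0 + max (p - y2) 0 + max (p - y3) 0 + max (p - y4) 0) \<ge> (p::real)"
  by (smt (verit))

lemma int_add5:
  fixes f0 f1 f2 f3 f4 :: "real \<Rightarrow> real"
  assumes "continuous_on {l..r} f0" "continuous_on {l..r} f1" "continuous_on {l..r} f2" "continuous_on {l..r} f3" "continuous_on {l..r} f4"
  shows "integral {l..r} (\<lambda>x. f0 x + (f1 x + f2 x + f3 x + f4 x)) = integral {l..r} f0 + (integral {l..r} f1 + integral {l..r} f2 + integral {l..r} f3 + integral {l..r} f4)"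
proof -
  have i: "f integrable_on {l..r}" if "continuous_on {l..r} f" for f :: "real \<Rightarrow> real"
    using that by (rule integrable_continuous_interval)
  note ii = i[OF assms(1)] i[OF assms(2)] i[OF assms(3)] i[OF assms(4)] i[OF assms(5)]
  show ?thesis
    by (simp add: integral_add ii integrable_add)
qed

lemma lower_J1:
  "integral {0..1/3} (mm a1 a2 a3 a4) \<ge> 1/432 - (Af a1 + Af a2 + Af a3 + Af a4)"
proof -
  let ?g = "\<lambda>a x. max (1/144 - (x-a)^2) (0::real)"
  have "integral {0..1/3} (\<lambda>x::real. 1/144::real) \<le> integral {0..1/3} (\<lambda>x. mm a1 a2 a3 a4 x + (?g a1 x + ?g a2 x + ?g a3 x + ?g a4 x))"
    by (rule integral_le) (auto intro!: integrable_continuous_interval continuous_intros mm_cont simp: mm_def min4_ge)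
  also have "\<dots> = integral {0..1/3} (mm a1 a2 a3 a4) + (Af a1 + Af a2 + Af a3 + Af a4)"
    unfolding Af_def by (rule int_add5) (intro continuous_intros mm_cont)+
  finally show ?thesis by simp
qed

lemma lower_J23:
  assumes "c = 13/18 \<or> c = 17/18"
  shows "integral {c-1/18..c+1/18} (mm a1 a2 a3 a4) \<ge> 1/1944 + 1/8748 - (Bf c a1 + Bf c a2 + Bf c a3 + Bf c a4)"
proof -
  let ?g = "\<lambda>a x. max (1/216 + (x-c)^2 - (x-a)^2) (0::real)"
  have "integral {c-1/18..c+1/18} (\<lambda>x. 1/216 + (x-c)^2) \<le> integral {c-1/18..c+1/18} (\<lambda>x. mm a1 a2 a3 a4 x + (?g a1 x + ?g a2 x + ?g a3 x + ?g a4 x))"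
  proof (rule integral_le)
    fix x
    show "1/216 + (x-c)^2 \<le> mm a1 a2 a3 a4 x + (?g a1 x + ?g a2 x + ?g a3 x + ?g a4 x)"
      unfolding mm_def by (rule min4_ge)
  qed (auto intro!: integrable_continuous_interval continuous_intros mm_cont)
  also have "\<dots> = integral {c-1/18..c+1/18} (mm a1 a2 a3 a4) + (Bf c a1 + Bf c a2 + Bf c a3 + Bf c a4)"
    unfolding Bf_def by (rule int_add5) (intro continuous_intros mm_cont)+
  finally have *: "integral {c-1/18..c+1/18} (\<lambda>x. 1/216 + (x-c)^2) \<le> integral {c-1/18..c+1/18} (mm a1 a2 a3 a4) + (Bf c a1 + Bf c a2 + Bf c a3 + Bf c a4)" .
  have "integral {c-1/18..c+1/18} (\<lambda>x. 1/216 + (x-c)^2) = (1/216*(c+1/18) + (c+1/18-c)^3/3) - (1/216*(c-1/18) + (c-1/18-c)^3/3)"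
    by (rule ftc_real) (auto intro!: derivative_eq_intros simp: power2_eq_square)
  also have "\<dots> = 1/1944 + 1/8748" by (simp add: power3_eq_cube field_simps)
  finally show ?thesis using * by simp
qed

lemma D_lower:
  "distortion P {a1, a2, a3, a4} \<ge> 49/7776 - (Nf a1 + Nf a2 + Nf a3 + Nf a4)"
proof -
  note L1 = lower_J1[of a1 a2 a3 a4]
  note L2 = lower_J23[of "13/18" a1 a2 a3 a4]
  note L3 = lower_J23[of "17/18" a1 a2 a3 a4]
  show ?thesis using L1 L2 L3 unfolding distortion4 Nf_def by simp
qed


lemma int_sq: "l \<le> r \<Longrightarrow> integral {l..r} (\<lambda>x. (x-a)^2) = ((r-a)^3 - (l-a)^3)/(3::real)"
  by (subst ftc_real[where F="\<lambda>x::real. (x-a)^3/3"]) (auto intro!: derivative_eq_intros simp: power2_eq_square field_simps)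

lemma int_mono_sq:
  assumes "l \<le> r" "\<And>x. l \<le> x \<Longrightarrow> x \<le> r \<Longrightarrow> mm a1 a2 a3 a4 x \<le> (x-a)^2"
  shows "integral {l..r} (mm a1 a2 a3 a4) \<le> ((r-a)^3 - (l-a)^3)/3"
proof -
  have "integral {l..r} (mm a1 a2 a3 a4) \<le> integral {l..r} (\<lambda>x. (x-a)^2)"
    by (rule integral_le) (auto intro!: integrable_continuous_interval continuous_intros mm_cont assms(2))
  then show ?thesis using int_sq[OF assms(1)] by simp
qed

lemma int_mono_sq':
  assumes "l \<le> r" "\<And>x. l \<le> x \<Longrightarrow> x \<le> r \<Longrightarrow> (x-a)^2 \<le> mm a1 a2 a3 a4 x"
  shows "integral {l..r} (mm a1 a2 a3 a4) \<ge> ((r-a)^3 - (l-a)^3)/3"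
proof -
  have "integral {l..r} (mm a1 a2 a3 a4) \<ge> integral {l..r} (\<lambda>x. (x-a)^2)"
    by (rule integral_le) (auto intro!: integrable_continuous_interval continuous_intros mm_cont assms(2))
  then show ?thesis using int_sq[OF assms(1)] by simp
qed

lemma D_star: "distortion P {1/12, 1/4, 13/18, 17/18} \<le> 13/7776"
proof -
  let ?m = "mm (1/12) (1/4) (13/18) (17/18)"
  have int: "?m integrable_on {0..1/3}"
    by (intro integrable_continuous_interval mm_cont)
  have "integral {0..1/3} ?m = integral {0..1/6} ?m + integral {1/6..1/3} ?m"
    using Henstock_Kurzweil_Integration.integral_combine[of 0 "1/6" "1/3" ?m] int by simp
  moreover have "integral {0..1/6} ?m \<le> ((1/6-1/12)^3 - (0-1/12)^3)/3"
    by (rule int_mono_sq) (auto simp: mm_def)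
  then have "integral {0..1/6} ?m \<le> 1/2592" by (simp add: power3_eq_cube)
  moreover have "integral {1/6..1/3} ?m \<le> ((1/3-1/4)^3 - (1/6-1/4)^3)/3"
    by (rule int_mono_sq) (auto simp: mm_def)
  then have "integral {1/6..1/3} ?m \<le> 1/2592" by (simp add: power3_eq_cube)
  moreover have "integral {2/3..7/9} ?m \<le> ((7/9-13/18)^3 - (2/3-13/18)^3)/3"
    by (rule int_mono_sq) (auto simp: mm_def)
  then have "integral {2/3..7/9} ?m \<le> 1/8748" by (simp add: power3_eq_cube)
  moreover have "integral {8/9..1} ?m \<le> ((1-17/18)^3 - (8/9-17/18)^3)/3"
    by (rule int_mono_sq) (auto simp: mm_def)
  then have "integral {8/9..1} ?m \<le> 1/8748" by (simp add: power3_eq_cube)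
  ultimately show ?thesis unfolding distortion4 by linarith
qed

lemma sq_ge_36: "1/6 \<le> \<bar>y\<bar> \<Longrightarrow> 1/36 \<le> (y::real)^2"
proof -
  assume h: "1/6 \<le> \<bar>y\<bar>"
  have "(1/6)^2 \<le> \<bar>y\<bar>^2" using h by (intro power_mono) auto
  then show ?thesis by (simp add: power2_eq_square)
qed

lemma nearer: "p \<le> q \<Longrightarrow> x \<le> (p+q)/2 \<Longrightarrow> (x-p)^2 \<le> (x-(q::real))^2"
proof -
  assume h: "p \<le> q" "x \<le> (p+q)/2"
  have "(x-q)^2 - (x-p)^2 = (q-p)*((p+q) - 2*x)" by (simp add: power2_eq_square algebra_simps)
  moreover have "0 \<le> (q-p)*((p+q) - 2*x)" using h by (intro mult_nonneg_nonneg) auto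
  ultimately show ?thesis by simp
qed

lemma nearer': "p \<le> q \<Longrightarrow> (p+q)/2 \<le> x \<Longrightarrow> (x-q)^2 \<le> (x-(p::real))^2"
proof -
  assume h: "p \<le> q" "(p+q)/2 \<le> x"
  have "(x-p)^2 - (x-q)^2 = (q-p)*(2*x - (p+q))" by (simp add: power2_eq_square algebra_simps)
  moreover have "0 \<le> (q-p)*(2*x - (p+q))" using h by (intro mult_nonneg_nonneg) auto
  ultimately show ?thesis by simp
qed

definition inS :: "real \<Rightarrow> bool" where
  "inS b \<longleftrightarrow> (1/12 \<le> b \<and> b \<le> 1/4) \<or> b = 13/18 \<or> b = 17/18"

lemma int_nonneg_mm: "l \<le> r \<Longrightarrow> 0 \<le> integral {l..r} (mm a1 a2 a3 a4)"
  by (rule integral_nonneg) (auto intro!: integrable_continuous_interval mm_cont mm_nonneg)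

lemma endgame:
  assumes o: "a1 < a2" "a2 < a3" "a3 < a4"
    and S: "inS a1" "inS a2" "inS a3" "inS a4"
    and D: "distortion P {a1, a2, a3, a4} \<le> 13/7776"
  shows "a1 = 1/12 \<and> a2 = 1/4 \<and> a3 = 13/18 \<and> a4 = 17/18"
proof -
  let ?m = "mm a1 a2 a3 a4"
  have n1: "0 \<le> integral {0..1/3} ?m" by (rule int_nonneg_mm) simp
  have n2: "0 \<le> integral {2/3..7/9} ?m" by (rule int_nonneg_mm) simp
  have n3: "0 \<le> integral {8/9..1} ?m" by (rule int_nonneg_mm) simp
  have c13: "a1 = 13/18 \<or> a2 = 13/18 \<or> a3 = 13/18 \<or> a4 = 13/18"
  proof (rule ccontr)
    assume nc: "\<not> ?thesis"
    have far: "1/36 \<le> (x-a)^2" if "a = a1 \<or> a = a2 \<or> a = a3 \<or> a = a4" "2/3 \<le> x" "x \<le> 7/9" for a x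
    proof -
      have "inS a" "a \<noteq> 13/18" using that S nc by auto
      then have "1/6 \<le> \<bar>x - a\<bar>" using that unfolding inS_def by auto
      then show ?thesis by (rule sq_ge_36)
    qed
    have pw: "1/36 \<le> ?m x" if "x \<in> {2/3..7/9}" for x
      using far[of a1 x] far[of a2 x] far[of a3 x] far[of a4 x] that unfolding mm_def by simp
    have "integral {2/3..7/9} ?m \<ge> integral {2/3..7/9} (\<lambda>x::real. 1/36::real)"
      by (rule integral_le[OF _ _ pw]) (auto intro!: integrable_continuous_interval mm_cont)
    then have "integral {2/3..7/9} ?m \<ge> 1/324" by simp
    then have "distortion P {a1, a2, a3, a4} \<ge> 9/4 * (1/324)" unfolding distortion4 using n1 n3 by simp
    then show False using D by simp
  qed
  have c17: "a1 = 17/18 \<or> a2 = 17/18 \<or> a3 = 17/18 \<or> a4 = 17/18"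
  proof (rule ccontr)
    assume nc: "\<not> ?thesis"
    have far: "1/36 \<le> (x-a)^2" if "a = a1 \<or> a = a2 \<or> a = a3 \<or> a = a4" "8/9 \<le> x" "x \<le> 1" for a x
    proof -
      have "inS a" "a \<noteq> 17/18" using that S nc by auto
      then have "1/6 \<le> \<bar>x - a\<bar>" using that unfolding inS_def by auto
      then show ?thesis by (rule sq_ge_36)
    qed
    have pw: "1/36 \<le> ?m x" if "x \<in> {8/9..1}" for x
      using far[of a1 x] far[of a2 x] far[of a3 x] far[of a4 x] that unfolding mm_def by simp
    have "integral {8/9..1} ?m \<ge> integral {8/9..1} (\<lambda>x::real. 1/36::real)"
      by (rule integral_le[OF _ _ pw]) (auto intro!: integrable_continuous_interval mm_cont)
    then have "integral {8/9..1} ?m \<ge> 1/324" by simp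
    then have "distortion P {a1, a2, a3, a4} \<ge> 9/4 * (1/324)" unfolding distortion4 using n1 n2 by simp
    then show False using D by simp
  qed
  have a4: "a4 = 17/18" using c17 c13 o S unfolding inS_def by auto
  have a3: "a3 = 13/18" using c17 c13 o S a4 unfolding inS_def by auto
  have a12: "1/12 \<le> a1" "a1 \<le> 1/4" "1/12 \<le> a2" "a2 \<le> 1/4" using o S a3 a4 unfolding inS_def by auto
  define t where "t = (a1 + a2)/2"
  have t: "0 \<le> t" "t \<le> 1/3" "a1 \<le> t" "t \<le> a2" using a12 o unfolding t_def by auto
  have intJ1: "?m integrable_on {0..1/3}" by (intro integrable_continuous_interval mm_cont)
  have s1: "integral {0..1/3} ?m = integral {0..t} ?m + integral {t..1/3} ?m"
    using Henstock_Kurzweil_Integration.integral_combine[of 0 t "1/3" ?m] intJ1 t by simp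
  have s2: "integral {0..t} ?m \<ge> ((t-a1)^3 - (0-a1)^3)/3"
  proof (rule int_mono_sq'[OF t(1)])
    fix x :: real assume x: "0 \<le> x" "x \<le> t"
    have "(x-a1)^2 \<le> (x-a2)^2" using x o by (intro nearer) (auto simp: t_def)
    moreover have "(x-a1)^2 \<le> (x-a3)^2" using x o t by (intro nearer) (auto simp: t_def)
    moreover have "(x-a1)^2 \<le> (x-a4)^2" using x o t by (intro nearer) (auto simp: t_def)
    ultimately show "(x-a1)^2 \<le> ?m x" unfolding mm_def by simp
  qed
  have s3: "integral {t..1/3} ?m \<ge> ((1/3-a2)^3 - (t-a2)^3)/3"
  proof (rule int_mono_sq'[OF t(2)])
    fix x :: real assume x: "t \<le> x" "x \<le> 1/3"
    have "(x-a2)^2 \<le> (x-a1)^2" using x o by (intro nearer') (auto simp: t_def)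
    moreover have "(x-a2)^2 \<le> (x-a3)^2" using x o a3 a12 by (intro nearer) auto
    moreover have "(x-a2)^2 \<le> (x-a4)^2" using x o a4 a12 by (intro nearer) auto
    ultimately show "(x-a2)^2 \<le> ?m x" unfolding mm_def by simp
  qed
  have s4: "integral {2/3..7/9} ?m \<ge> ((7/9-13/18)^3 - (2/3-13/18)^3)/3"
  proof (rule int_mono_sq')
    fix x :: real assume x: "2/3 \<le> x" "x \<le> 7/9"
    have "(x-a3)^2 \<le> (x-a1)^2" using x o a3 a12 by (intro nearer') auto
    moreover have "(x-a3)^2 \<le> (x-a2)^2" using x o a3 a12 by (intro nearer') auto
    moreover have "(x-a3)^2 \<le> (x-a4)^2" using x o a3 a4 by (intro nearer) auto
    ultimately show "(x-13/18)^2 \<le> ?m x" unfolding mm_def a3 by simp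
  qed simp
  have s5: "integral {8/9..1} ?m \<ge> ((1-17/18)^3 - (8/9-17/18)^3)/3"
  proof (rule int_mono_sq')
    fix x :: real assume x: "8/9 \<le> x" "x \<le> 1"
    have "(x-a4)^2 \<le> (x-a1)^2" using x o a4 a12 by (intro nearer') auto
    moreover have "(x-a4)^2 \<le> (x-a2)^2" using x o a4 a12 by (intro nearer') auto
    moreover have "(x-a4)^2 \<le> (x-a3)^2" using x o a3 a4 by (intro nearer') auto
    ultimately show "(x-17/18)^2 \<le> ?m x" unfolding mm_def a4 by simp
  qed simp
  have s2': "3 * integral {0..t} ?m \<ge> (t-a1)^3 + a1^3" using s2 by (simp add: field_simps)
  have s3': "3 * integral {t..1/3} ?m \<ge> (1/3-a2)^3 - (t-a2)^3" using s3 by (simp add: field_simps)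
  have s4': "integral {2/3..7/9} ?m \<ge> 1/8748" using s4 by (simp add: power3_eq_cube)
  have s5': "integral {8/9..1} ?m \<ge> 1/8748" using s5 by (simp add: power3_eq_cube)
  have E: "((t-a1)^3 + a1^3) + ((1/3-a2)^3 - (t-a2)^3) \<le> 1/432"
    using D s1 s2' s3' s4' s5' unfolding distortion4 by linarith
  define a where "a = a1"
  define c where "c = 1/3 - a2"
  define g where "g = a2 - a1"
  have id: "((t-a1)^3 + a1^3) + ((1/3-a2)^3 - (t-a2)^3) - 1/432
      = (a-1/12)^2*(a+1/6) + (c-1/12)^2*(c+1/6) + (g-1/6)^2*(g+1/3)/4"
    unfolding a_def c_def g_def t_def by (simp add: field_simps power2_eq_square power3_eq_cube)
  have T1: "0 \<le> (a-1/12)^2*(a+1/6)" using a12 unfolding a_def by (intro mult_nonneg_nonneg) auto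
  have T2: "0 \<le> (c-1/12)^2*(c+1/6)" using a12 unfolding c_def by (intro mult_nonneg_nonneg) auto
  have T3: "0 \<le> (g-1/6)^2*(g+1/3)/4" using o unfolding g_def by (intro divide_nonneg_pos mult_nonneg_nonneg) auto
  have z1: "(a-1/12)^2*(a+1/6) = 0" using id E T1 T2 T3 by linarith
  have z2: "(c-1/12)^2*(c+1/6) = 0" using id E T1 T2 T3 by linarith
  have "a + 1/6 > 0" "c + 1/6 > 0" using a12 unfolding a_def c_def by auto
  then have "a = 1/12" "c = 1/12" using z1 z2 by auto
  then show ?thesis using a3 a4 unfolding a_def c_def by simp
qed


lemma distortion_nonneg:
  assumes "finite \<alpha>" "\<alpha> \<noteq> {}"
  shows "0 \<le> distortion P \<alpha>"
  unfolding distortion_def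
proof (rule integral_nonneg_AE, rule AE_I2)
  fix x
  have "Min ((\<lambda>a. (x - a)\<^sup>2) ` \<alpha>) \<in> (\<lambda>a. (x - a)\<^sup>2) ` \<alpha>"
    using assms by (intro Min_in) auto
  then show "0 \<le> Min ((\<lambda>a. (x - a)\<^sup>2) ` \<alpha>)" by auto
qed

theorem lemma5p6:
  fixes a1 a2 a3 a4 :: real
  assumes "optimal_set P 4 {a1, a2, a3, a4}"
    and "a1 < a2" and "a2 < a3" and "a3 < a4"
  shows "a1 = 1/12 \<and> a2 = 1/4 \<and> a3 = 13/18 \<and> a4 = 17/18 \<and> quant_error P 4 = 13/7776"
proof -
  have Dq: "distortion P {a1, a2, a3, a4} = quant_error P 4"
    using assms(1) unfolding optimal_set_def by simp
  let ?S = "{distortion P \<alpha> | \<alpha>. finite \<alpha> \<and> \<alpha> \<noteq> {} \<and> card \<alpha> \<le> 4}"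
  have bdd: "bdd_below ?S"
    by (rule bdd_belowI[of _ 0]) (auto intro: distortion_nonneg)
  have mem: "distortion P {1/12, 1/4, 13/18, 17/18} \<in> ?S"
    by (rule CollectI, rule exI[of _ "{1/12, 1/4, 13/18, 17/18}"]) simp
  have "quant_error P 4 \<le> distortion P {1/12, 1/4, 13/18, 17/18}"
    unfolding quant_error_def by (rule cInf_lower[OF mem bdd])
  then have up: "distortion P {a1, a2, a3, a4} \<le> 13/7776" using Dq D_star by simp
  have N1: "Nf a1 \<le> 1/864" "Nf a2 \<le> 1/864" "Nf a3 \<le> 1/864" "Nf a4 \<le> 1/864"
    by (rule Nf_facts(1))+
  have low: "distortion P {a1, a2, a3, a4} \<ge> 49/7776 - (Nf a1 + Nf a2 + Nf a3 + Nf a4)"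
    by (rule D_lower)
  have eq: "Nf a1 = 1/864" "Nf a2 = 1/864" "Nf a3 = 1/864" "Nf a4 = 1/864"
    using up low N1 by linarith+
  have S: "inS a1" "inS a2" "inS a3" "inS a4"
    using Nf_facts(2)[OF eq(1)] Nf_facts(2)[OF eq(2)] Nf_facts(2)[OF eq(3)] Nf_facts(2)[OF eq(4)]
    unfolding inS_def by auto
  have vals: "a1 = 1/12 \<and> a2 = 1/4 \<and> a3 = 13/18 \<and> a4 = 17/18"
    by (rule endgame[OF assms(2-4) S up])
  have "distortion P {a1, a2, a3, a4} \<ge> 13/7776" using low N1 by linarith
  then have "quant_error P 4 = 13/7776" using up Dq by simp
  with vals show ?thesis by simp
qed

end
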